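(* Let $N(T)$ be a $C^0$ net on a grid $T$ with lines $s_i$, $t_j$, having the BMSDD property with constant $L$, and let $(\boldsymbol{\alpha}^{[s]},\boldsymbol{\beta}^{[s]}),(\boldsymbol{\alpha}^{[t]},\boldsymbol{\beta}^{[t]})\in\mathscr{W}$. Let $\tilde T$ be the grid with lines $\tilde s_{2i}=(1-\alpha^{[s]}_i)s_i+\alpha^{[s]}_is_{i+1}$, $\tilde s_{2i+1}=(1-\beta^{[s]}_i)s_i+\beta^{[s]}_is_{i+1}$, $\tilde t_{2j}=(1-\alpha^{[t]}_j)t_j+\alpha^{[t]}_jt_{j+1}$, $\tilde t_{2j+1}=(1-\beta^{[t]}_j)t_j+\beta^{[t]}_jt_{j+1}$ ($i,j\in\mathbb{Z}$). Then the net $\mathcal{C}(N)|_{\tilde T}$ has the BMSDD property with constant $3L$.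
   Context: $\mathscr{W}$ is the set of pairs $(\boldsymbol{\alpha},\boldsymbol{\beta})$ of real bi-infinite sequences with $\inf_i\min\{\alpha_i,1-\beta_i,\beta_i-\alpha_i\}>0$. For strictly increasing bi-infinite real sequences $(s_i)$, $(t_j)$, unbounded above and below, the grid is $T=\bigcup_i\{s_i\}\times\mathbb{R}\cup\bigcup_j\mathbb{R}\times\{t_j\}$. A net $N(T)$ is a function on $T$ with values in $\mathbb{R}^m$; it is $C^0$ if all u-functions $s\mapsto N(s,t_j)$, $t\mapsto N(s_i,t)$ are continuous. The piecewise Coons patch is defined on each rectangle $[s_i,s_{i+1}]\times[t_j,t_{j+1}]$, with $h_1=s_{i+1}-s_i$, $h_2=t_{j+1}-t_j$, by $\mathcal{C}(N)(s,t)=\frac{s_{i+1}-s}{h_1}N(s_i,t)+\frac{s-s_i}{h_1}N(s_{i+1},t)+\frac{t_{j+1}-t}{h_2}N(s,t_j)+\frac{t-t_j}{h_2}N(s,t_{j+1})-B(s,t)$, with $B(s,t)=\frac{s_{i+1}-s}{h_1}\big(\frac{t_{j+1}-t}{h_2}N(s_i,t_j)+\frac{t-t_j}{h_2}N(s_i,t_{j+1})\big)+\frac{s-s_i}{h_1}\big(\frac{t_{j+1}-t}{h_2}N(s_{i+1},t_j)+\frac{t-t_j}{h_2}N(s_{i+1},t_{j+1})\big)$. For $\sigma_1\ne\sigma_2$, $\tau_1\ne\tau_2$, $[\sigma_1,\sigma_2;\tau_1,\tau_2]N=\frac{N(\sigma_1,\tau_1)+N(\sigma_2,\tau_2)-N(\sigma_2,\tau_1)-N(\sigma_1,\tau_2)}{(\sigma_1-\sigma_2)(\tau_1-\tau_2)}$;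 a net on a grid has the BMSDD property with constant $L$ if $\|[\sigma_1,\sigma_2;\tau_1,\tau_2]N\|_\infty\le L$ whenever $\sigma_1\ne\sigma_2$, $\tau_1\ne\tau_2$ and all four points $(\sigma_i,\tau_j)$ lie on the grid. *)

theory Defs
  imports "HOL-Analysis.Analysis"
begin

definition grid_lines :: "(int \<Rightarrow> real) \<Rightarrow> bool" where
  "grid_lines s \<longleftrightarrow> strict_mono s \<and> (\<forall>M. \<exists>i. s i > M) \<and> (\<forall>M. \<exists>i. s i < M)"

definition grid :: "(int \<Rightarrow> real) \<Rightarrow> (int \<Rightarrow> real) \<Rightarrow> (real \<times> real) set" where
  "grid s t = {(x, y). (\<exists>i. x = s i) \<or> (\<exists>j. y = t j)}"

definition W_class :: "(int \<Rightarrow> real) \<Rightarrow> (int \<Rightarrow> real) \<Rightarrow> bool" where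
  "W_class \<alpha> \<beta> \<longleftrightarrow> (INF i. min (\<alpha> i) (min (1 - \<beta> i) (\<beta> i - \<alpha> i))) > 0
      \<and> bdd_below (range (\<lambda>i. min (\<alpha> i) (min (1 - \<beta> i) (\<beta> i - \<alpha> i))))"

definition C0_net :: "(int \<Rightarrow> real) \<Rightarrow> (int \<Rightarrow> real) \<Rightarrow> (real \<Rightarrow> real \<Rightarrow> real^'m) \<Rightarrow> bool" where
  "C0_net s t N \<longleftrightarrow> (\<forall>j. continuous_on UNIV (\<lambda>x. N x (t j))) \<and> (\<forall>i. continuous_on UNIV (\<lambda>y. N (s i) y))"

definition mixed_dd :: "(real \<Rightarrow> real \<Rightarrow> real^'m) \<Rightarrow> real \<Rightarrow> real \<Rightarrow> real \<Rightarrow> real \<Rightarrow> real^'m" where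
  "mixed_dd N \<sigma>1 \<sigma>2 \<tau>1 \<tau>2 =
     (1 / ((\<sigma>1 - \<sigma>2) * (\<tau>1 - \<tau>2))) *\<^sub>R (N \<sigma>1 \<tau>1 + N \<sigma>2 \<tau>2 - N \<sigma>2 \<tau>1 - N \<sigma>1 \<tau>2)"

definition BMSDD :: "(real \<times> real) set \<Rightarrow> (real \<Rightarrow> real \<Rightarrow> real^'m) \<Rightarrow> real \<Rightarrow> bool" where
  "BMSDD G N L \<longleftrightarrow> (\<forall>\<sigma>1 \<sigma>2 \<tau>1 \<tau>2. \<sigma>1 \<noteq> \<sigma>2 \<longrightarrow> \<tau>1 \<noteq> \<tau>2 \<longrightarrow>
      (\<sigma>1, \<tau>1) \<in> G \<longrightarrow> (\<sigma>1, \<tau>2) \<in> G \<longrightarrow> (\<sigma>2, \<tau>1) \<in> G \<longrightarrow> (\<sigma>2, \<tau>2) \<in> G \<longrightarrow>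
      infnorm (mixed_dd N \<sigma>1 \<sigma>2 \<tau>1 \<tau>2) \<le> L)"

definition cell :: "(int \<Rightarrow> real) \<Rightarrow> real \<Rightarrow> int" where
  "cell s x = (THE i. s i \<le> x \<and> x < s (i + 1))"

definition coons :: "(int \<Rightarrow> real) \<Rightarrow> (int \<Rightarrow> real) \<Rightarrow> (real \<Rightarrow> real \<Rightarrow> real^'m) \<Rightarrow> real \<Rightarrow> real \<Rightarrow> real^'m" where
  "coons s t N x y =
    (let i = cell s x; j = cell t y;
         h1 = s (i + 1) - s i; h2 = t (j + 1) - t j;
         a0 = (s (i + 1) - x) / h1; a1 = (x - s i) / h1;
         b0 = (t (j + 1) - y) / h2; b1 = (y - t j) / h2;
         B = a0 *\<^sub>R (b0 *\<^sub>R N (s i) (t j) + b1 *\<^sub>R N (s i) (t (j + 1)))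
           + a1 *\<^sub>R (b0 *\<^sub>R N (s (i + 1)) (t j) + b1 *\<^sub>R N (s (i + 1)) (t (j + 1)))
     in a0 *\<^sub>R N (s i) y + a1 *\<^sub>R N (s (i + 1)) y
        + b0 *\<^sub>R N x (t j) + b1 *\<^sub>R N x (t (j + 1)) - B)"

definition refine :: "(int \<Rightarrow> real) \<Rightarrow> (int \<Rightarrow> real) \<Rightarrow> (int \<Rightarrow> real) \<Rightarrow> int \<Rightarrow> real" where
  "refine \<alpha> \<beta> s k =
    (let i = k div 2 in
      if even k then (1 - \<alpha> i) * s i + \<alpha> i * s (i + 1)
      else (1 - \<beta> i) * s i + \<beta> i * s (i + 1))"

end

theory Submission
  imports Defs
begin

definition dd4 :: "(real \<Rightarrow> real \<Rightarrow> 'a::real_vector) \<Rightarrow> real \<Rightarrow> real \<Rightarrow> real \<Rightarrow> real \<Rightarrow> 'a" where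
  "dd4 F a b c d = F a c + F b d - F b c - F a d"

definition coonsf :: "(int \<Rightarrow> real) \<Rightarrow> (int \<Rightarrow> real) \<Rightarrow> (real \<Rightarrow> real \<Rightarrow> real^'m) \<Rightarrow> int \<Rightarrow> int \<Rightarrow> real \<Rightarrow> real \<Rightarrow> real^'m" where
  "coonsf s t N i j x y =
    (let h1 = s (i + 1) - s i; h2 = t (j + 1) - t j;
         a0 = (s (i + 1) - x) / h1; a1 = (x - s i) / h1;
         b0 = (t (j + 1) - y) / h2; b1 = (y - t j) / h2;
         B = a0 *\<^sub>R (b0 *\<^sub>R N (s i) (t j) + b1 *\<^sub>R N (s i) (t (j + 1)))
           + a1 *\<^sub>R (b0 *\<^sub>R N (s (i + 1)) (t j) + b1 *\<^sub>R N (s (i + 1)) (t (j + 1)))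
     in a0 *\<^sub>R N (s i) y + a1 *\<^sub>R N (s (i + 1)) y
        + b0 *\<^sub>R N x (t j) + b1 *\<^sub>R N x (t (j + 1)) - B)"

lemma coons_f: "coons s t N x y = coonsf s t N (cell s x) (cell t y) x y"
  by (simp add: coons_def coonsf_def Let_def)

lemma gl_mono: "grid_lines s \<Longrightarrow> i < k \<Longrightarrow> s i < s k"
  unfolding grid_lines_def strict_mono_def by blast

lemma gl_le: "grid_lines s \<Longrightarrow> i \<le> k \<Longrightarrow> s i \<le> s k"
  using gl_mono[of s i k] by (cases "i = k") auto

lemma cell_eq:
  assumes g: "grid_lines s" and "s i \<le> x" "x < s (i + 1)"
  shows "cell s x = i"
  unfolding cell_def
proof (rule the_equality)
  show "s i \<le> x \<and> x < s (i + 1)" using assms by auto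
next
  fix k assume k: "s k \<le> x \<and> x < s (k + 1)"
  show "k = i"
  proof (rule ccontr)
    assume "k \<noteq> i"
    then consider "k + 1 \<le> i" | "i + 1 \<le> k" by linarith
    then show False
    proof cases
      case 1 then have "s (k+1) \<le> s i" using gl_le[OF g] by blast
      then show False using k assms by linarith
    next
      case 2 then have "s (i+1) \<le> s k" using gl_le[OF g] by blast
      then show False using k assms by linarith
    qed
  qed
qed

lemma cell_at: "grid_lines s \<Longrightarrow> cell s (s k) = k"
  using cell_eq[of s k "s k"] gl_mono[of s k "k+1"] by auto

lemma coonsf_edges:
  assumes h1: "s (i + 1) \<noteq> s i" and h2: "t (j + 1) \<noteq> t j"
  shows "coonsf s t N i j (s i) y = N (s i) y"
    and "coonsf s t N i j (s (i+1)) y = N (s (i+1)) y"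
    and "coonsf s t N i j x (t j) = N x (t j)"
    and "coonsf s t N i j x (t (j+1)) = N x (t (j+1))"
proof -
  have e1: "(s (i + 1) - s i) / (s (i + 1) - s i) = 1" using h1 by simp
  have e2: "(t (j + 1) - t j) / (t (j + 1) - t j) = 1" using h2 by simp
  show "coonsf s t N i j (s i) y = N (s i) y"
    by (simp add: coonsf_def Let_def e1 h1)
  show "coonsf s t N i j (s (i+1)) y = N (s (i+1)) y"
    by (simp add: coonsf_def Let_def e1 h1)
  show "coonsf s t N i j x (t j) = N x (t j)"
    by (simp add: coonsf_def Let_def e2 h2)
  show "coonsf s t N i j x (t (j+1)) = N x (t (j+1))"
    by (simp add: coonsf_def Let_def e2 h2)
qed



lemma dd4_add: "dd4 (\<lambda>x y. P x y + Q x y) a b c d = dd4 P a b c d + dd4 Q a b c d"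
  by (simp add: dd4_def algebra_simps)
lemma dd4_diff: "dd4 (\<lambda>x y. P x y - Q x y) a b c d = dd4 P a b c d - dd4 Q a b c d"
  by (simp add: dd4_def algebra_simps)
lemma dd4_sepx: "dd4 (\<lambda>x y. f x *\<^sub>R G y) a b c d = (f a - f b) *\<^sub>R (G c - G d)"
  by (simp add: dd4_def algebra_simps)
lemma dd4_sepy: "dd4 (\<lambda>x y. g y *\<^sub>R F x) a b c d = (g c - g d) *\<^sub>R (F a - F b)"
  by (simp add: dd4_def algebra_simps)

lemma coonsf_dd4:
  assumes h1: "s (i + 1) \<noteq> s i" and h2: "t (j + 1) \<noteq> t j"
  shows "dd4 (coonsf s t N i j) x1 x2 y1 y2 =
     ((x2 - x1) / (s (i+1) - s i)) *\<^sub>R dd4 N (s i) (s (i+1)) y1 y2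
   + ((y2 - y1) / (t (j+1) - t j)) *\<^sub>R dd4 N x1 x2 (t j) (t (j+1))
   - (((x2 - x1) / (s (i+1) - s i)) * ((y2 - y1) / (t (j+1) - t j))) *\<^sub>R dd4 N (s i) (s (i+1)) (t j) (t (j+1))"
proof -
  define h1' where "h1' = s (i + 1) - s i"
  define h2' where "h2' = t (j + 1) - t j"
  have a: "h1' \<noteq> 0" and b: "h2' \<noteq> 0" using h1 h2 by (auto simp: h1'_def h2'_def)
  define a0 where "a0 = (\<lambda>x. (s (i + 1) - x) / h1')"
  define a1 where "a1 = (\<lambda>x. (x - s i) / h1')"
  define b0 where "b0 = (\<lambda>y. (t (j + 1) - y) / h2')"
  define b1 where "b1 = (\<lambda>y. (y - t j) / h2')"
  define c where "c = (x2 - x1) / h1'"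
  define d where "d = (y2 - y1) / h2'"
  have ea0: "a0 x1 - a0 x2 = c" unfolding a0_def c_def using a by (simp add: field_simps)
  have ea1: "a1 x1 - a1 x2 = - c" unfolding a1_def c_def using a by (simp add: field_simps)
  have eb0: "b0 y1 - b0 y2 = d" unfolding b0_def d_def using b by (simp add: field_simps)
  have eb1: "b1 y1 - b1 y2 = - d" unfolding b1_def d_def using b by (simp add: field_simps)
  have bd: "(b0 y1 *\<^sub>R u + b1 y1 *\<^sub>R v) - (b0 y2 *\<^sub>R u + b1 y2 *\<^sub>R v) = d *\<^sub>R u + (- d) *\<^sub>R v" for u v :: "real^'m"
  proof -
    have "(b0 y1 *\<^sub>R u + b1 y1 *\<^sub>R v) - (b0 y2 *\<^sub>R u + b1 y2 *\<^sub>R v) = (b0 y1 - b0 y2) *\<^sub>R u + (b1 y1 - b1 y2) *\<^sub>R v"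
      by (simp add: algebra_simps)
    then show ?thesis unfolding eb0 eb1 .
  qed
  have cf: "coonsf s t N i j = (\<lambda>x y. a0 x *\<^sub>R N (s i) y + a1 x *\<^sub>R N (s (i + 1)) y
        + b0 y *\<^sub>R N x (t j) + b1 y *\<^sub>R N x (t (j + 1)) -
        (a0 x *\<^sub>R (b0 y *\<^sub>R N (s i) (t j) + b1 y *\<^sub>R N (s i) (t (j + 1)))
           + a1 x *\<^sub>R (b0 y *\<^sub>R N (s (i + 1)) (t j) + b1 y *\<^sub>R N (s (i + 1)) (t (j + 1)))))"
    by (simp add: fun_eq_iff coonsf_def Let_def a0_def a1_def b0_def b1_def h1'_def h2'_def)
  have "dd4 (coonsf s t N i j) x1 x2 y1 y2 =
     c *\<^sub>R (N (s i) y1 - N (s i) y2) + (- c) *\<^sub>R (N (s (i+1)) y1 - N (s (i+1)) y2)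
     + d *\<^sub>R (N x1 (t j) - N x2 (t j)) + (- d) *\<^sub>R (N x1 (t (j+1)) - N x2 (t (j+1)))
     - (c *\<^sub>R (d *\<^sub>R N (s i) (t j) + (- d) *\<^sub>R N (s i) (t (j + 1)))
        + (- c) *\<^sub>R (d *\<^sub>R N (s (i + 1)) (t j) + (- d) *\<^sub>R N (s (i + 1)) (t (j + 1))))"
    unfolding cf dd4_diff dd4_add dd4_sepx dd4_sepy ea0 ea1 eb0 eb1 bd by simp
  also have "\<dots> = c *\<^sub>R dd4 N (s i) (s (i+1)) y1 y2 + d *\<^sub>R dd4 N x1 x2 (t j) (t (j+1))
      - (c * d) *\<^sub>R dd4 N (s i) (s (i+1)) (t j) (t (j+1))"
    by (simp add: dd4_def algebra_simps)
  finally show ?thesis by (simp add: c_def d_def h1'_def h2'_def)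
qed


lemma coons_cell:
  assumes gs: "grid_lines s" and gt: "grid_lines t"
    and x: "s i \<le> x" "x \<le> s (i+1)" and y: "t j \<le> y" "y \<le> t (j+1)"
  shows "coons s t N x y = coonsf s t N i j x y"
proof -
  have hs: "\<And>k. s (k + 1) \<noteq> s k" using gl_mono[OF gs] by (metis less_add_one order_less_irrefl)
  have ht: "\<And>k. t (k + 1) \<noteq> t k" using gl_mono[OF gt] by (metis less_add_one order_less_irrefl)
  show ?thesis
  proof (cases "x < s (i+1) \<and> y < t (j+1)")
    case True
    then show ?thesis using cell_eq[OF gs x(1)] cell_eq[OF gt y(1)] by (simp add: coons_f)
  next
    case False
    then have "x = s (i+1) \<or> y = t (j+1)" using x y by auto
    then have "coonsf s t N i j x y = N x y" using coonsf_edges[where s=s and t=t and i=i and j=j and N=N, OF hs[of i] ht[of j]] by auto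
    moreover have "coons s t N x y = N x y"
    proof -
      have "x = s (i+1) \<Longrightarrow> coonsf s t N (cell s x) (cell t y) x y = N x y"
        using coonsf_edges(1)[where s=s and t=t and i="i+1" and j="cell t y" and N=N, OF hs[of "i+1"] ht[of "cell t y"]] cell_at[OF gs, of "i+1"] by simp
      moreover have "y = t (j+1) \<Longrightarrow> coonsf s t N (cell s x) (cell t y) x y = N x y"
        using coonsf_edges(3)[where s=s and t=t and i="cell s x" and j="j+1" and N=N, OF hs[of "cell s x"] ht[of "j+1"]] cell_at[OF gt, of "j+1"] by simp
      ultimately show ?thesis using \<open>x = s (i+1) \<or> y = t (j+1)\<close> by (auto simp: coons_f)
    qed
    ultimately show ?thesis by simp
  qed
qed

lemma mixed_dd_dd4: "mixed_dd N a b c d = (1 / ((a - b) * (c - d))) *\<^sub>R dd4 N a b c d"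
  by (simp add: mixed_dd_def dd4_def)

lemma BMSDD_dd4:
  assumes "BMSDD G N L" "(a, c) \<in> G" "(a, d) \<in> G" "(b, c) \<in> G" "(b, d) \<in> G"
  shows "infnorm (dd4 N a b c d) \<le> L * \<bar>a - b\<bar> * \<bar>c - d\<bar>"
proof (cases "a = b \<or> c = d")
  case True
  then have "dd4 N a b c d = 0" by (auto simp: dd4_def)
  then show ?thesis using True by (auto simp: infnorm_0)
next
  case False
  then have p: "\<bar>a - b\<bar> * \<bar>c - d\<bar> > 0" by auto
  have "infnorm (mixed_dd N a b c d) \<le> L" using assms False unfolding BMSDD_def by blast
  then have "infnorm (dd4 N a b c d) / (\<bar>a - b\<bar> * \<bar>c - d\<bar>) \<le> L"
    by (simp add: mixed_dd_dd4 infnorm_mul abs_mult)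
  then show ?thesis using p by (simp add: divide_le_eq mult.assoc)
qed


lemma infnorm_3: "infnorm (u + v - w) \<le> infnorm u + infnorm v + infnorm (w::'a::euclidean_space)"
proof -
  have "infnorm (u + v - w) \<le> infnorm (u + v) + infnorm (- w)"
    using infnorm_triangle[of "u + v" "- w"] by simp
  also have "\<dots> \<le> infnorm u + infnorm v + infnorm w"
    using infnorm_triangle[of u v] by (simp add: infnorm_neg)
  finally show ?thesis .
qed

lemma cell_bound:
  assumes gs: "grid_lines s" and gt: "grid_lines t" and B: "BMSDD (grid s t) N L"
    and x: "s i \<le> x1" "x1 \<le> s (i+1)" "s i \<le> x2" "x2 \<le> s (i+1)"
    and y: "t j \<le> y1" "y1 \<le> t (j+1)" "t j \<le> y2" "y2 \<le> t (j+1)"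
  shows "infnorm (dd4 (coons s t N) x1 x2 y1 y2) \<le> 3 * L * \<bar>x2 - x1\<bar> * \<bar>y2 - y1\<bar>"
proof -
  have h1: "s (i+1) > s i" using gl_mono[OF gs] by simp
  have h2: "t (j+1) > t j" using gl_mono[OF gt] by simp
  have "dd4 (coons s t N) x1 x2 y1 y2 = dd4 (coonsf s t N i j) x1 x2 y1 y2"
    unfolding dd4_def using coons_cell[where N=N, OF gs gt x(1) x(2) y(1) y(2)] coons_cell[where N=N, OF gs gt x(3) x(4) y(3) y(4)]
      coons_cell[where N=N, OF gs gt x(1) x(2) y(3) y(4)] coons_cell[where N=N, OF gs gt x(3) x(4) y(1) y(2)] by simp
  also have "\<dots> = ((x2 - x1) / (s (i+1) - s i)) *\<^sub>R dd4 N (s i) (s (i+1)) y1 y2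
   + ((y2 - y1) / (t (j+1) - t j)) *\<^sub>R dd4 N x1 x2 (t j) (t (j+1))
   - (((x2 - x1) / (s (i+1) - s i)) * ((y2 - y1) / (t (j+1) - t j))) *\<^sub>R dd4 N (s i) (s (i+1)) (t j) (t (j+1))"
    using coonsf_dd4 h1 h2 by (metis order_less_irrefl)
  finally have e: "dd4 (coons s t N) x1 x2 y1 y2 = \<dots>" .
  define c where "c = \<bar>(x2 - x1) / (s (i+1) - s i)\<bar>"
  define d where "d = \<bar>(y2 - y1) / (t (j+1) - t j)\<bar>"
  have c0: "c \<ge> 0" and d0: "d \<ge> 0" by (auto simp: c_def d_def)
  have g: "\<And>a b. (s a, b) \<in> grid s t" "\<And>a b. (a, t b) \<in> grid s t" by (auto simp: grid_def)
  have b1: "infnorm (dd4 N (s i) (s (i+1)) y1 y2) \<le> L * (s (i+1) - s i) * \<bar>y2 - y1\<bar>"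
    using BMSDD_dd4[OF B g(1)[of i y1] g(1)[of i y2] g(1)[of "i+1" y1] g(1)[of "i+1" y2]] h1
    by (simp add: abs_minus_commute[of y1 y2] abs_minus_commute[of "s i"])
  have b2: "infnorm (dd4 N x1 x2 (t j) (t (j+1))) \<le> L * \<bar>x2 - x1\<bar> * (t (j+1) - t j)"
    using BMSDD_dd4[OF B g(2)[of x1 j] g(2)[of x1 "j+1"] g(2)[of x2 j] g(2)[of x2 "j+1"]] h2
    by (simp add: abs_minus_commute[of x1 x2] abs_minus_commute[of "t j"])
  have b3: "infnorm (dd4 N (s i) (s (i+1)) (t j) (t (j+1))) \<le> L * (s (i+1) - s i) * (t (j+1) - t j)"
    using BMSDD_dd4[OF B g(1)[of i "t j"] g(1)[of i "t (j+1)"] g(1)[of "i+1" "t j"] g(1)[of "i+1" "t (j+1)"]] h1 h2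
    by (simp add: abs_minus_commute[of "t j"] abs_minus_commute[of "s i"])
  have "infnorm (dd4 (coons s t N) x1 x2 y1 y2) \<le>
      c * infnorm (dd4 N (s i) (s (i+1)) y1 y2) + d * infnorm (dd4 N x1 x2 (t j) (t (j+1)))
      + (c * d) * infnorm (dd4 N (s i) (s (i+1)) (t j) (t (j+1)))"
    unfolding e by (rule order_trans[OF infnorm_3]) (simp add: infnorm_mul c_def d_def abs_mult)
  also have "\<dots> \<le> c * (L * (s (i+1) - s i) * \<bar>y2 - y1\<bar>) + d * (L * \<bar>x2 - x1\<bar> * (t (j+1) - t j))
      + (c * d) * (L * (s (i+1) - s i) * (t (j+1) - t j))"
    by (intro add_mono mult_left_mono b1 b2 b3 c0 d0 mult_nonneg_nonneg)
  also have "\<dots> = 3 * L * \<bar>x2 - x1\<bar> * \<bar>y2 - y1\<bar>"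
  proof -
    have ar: "X / H1 * (L * H1 * Y) + Y / H2 * (L * X * H2) + (X / H1 * (Y / H2)) * (L * H1 * H2) = 3 * L * X * Y"
      if "H1 > 0" "H2 > 0" for X Y H1 H2 :: real using that by (simp add: field_simps)
    have "c = \<bar>x2 - x1\<bar> / (s (i+1) - s i)" "d = \<bar>y2 - y1\<bar> / (t (j+1) - t j)"
      using h1 h2 by (simp_all add: c_def d_def abs_divide)
    then show ?thesis using ar[of "s (i+1) - s i" "t (j+1) - t j" "\<bar>x2 - x1\<bar>" "\<bar>y2 - y1\<bar>"] h1 h2 by simp
  qed
  finally show ?thesis .
qed

lemma lip_extend:
  fixes g :: "real \<Rightarrow> 'a::euclidean_space"
  assumes gs: "grid_lines s"
    and cellb: "\<And>i a b. s i \<le> a \<Longrightarrow> a \<le> b \<Longrightarrow> b \<le> s (i+1) \<Longrightarrow> infnorm (g b - g a) \<le> K * (b - a)"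
  shows "infnorm (g b - g a) \<le> K * \<bar>b - a\<bar>"
proof -
  have main: "\<forall>a b. s i \<le> a \<longrightarrow> a \<le> b \<longrightarrow> b \<le> s (i + int n) \<longrightarrow> infnorm (g b - g a) \<le> K * (b - a)" for i n
  proof (induction n)
    case 0
    show ?case
    proof (intro allI impI)
      fix a b assume "s i \<le> a" "a \<le> b" "b \<le> s (i + int 0)"
      then have "a = b" by simp
      then show "infnorm (g b - g a) \<le> K * (b - a)" by (simp add: infnorm_0)
    qed
  next
    case (Suc n)
    show ?case
    proof (intro allI impI)
      fix a b assume a: "s i \<le> a" and ab: "a \<le> b" and b: "b \<le> s (i + int (Suc n))"
      have eq: "i + int (Suc n) = (i + int n) + 1" by simp
      have b': "b \<le> s (i + int n + 1)" using b eq by metis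
      show "infnorm (g b - g a) \<le> K * (b - a)"
      proof (cases "b \<le> s (i + int n)")
        case True then show ?thesis using Suc.IH a ab by blast
      next
        case False
        show ?thesis
        proof (cases "s (i + int n) \<le> a")
          case True then show ?thesis using cellb[of "i + int n" a b] ab b' by simp
        next
          case F2: False
          define c where "c = s (i + int n)"
          have 1: "infnorm (g c - g a) \<le> K * (c - a)" using Suc.IH a F2 c_def by auto
          have 2: "infnorm (g b - g c) \<le> K * (b - c)"
            using cellb[of "i + int n" c b] False b' c_def by simp
          have "infnorm (g b - g a) \<le> infnorm (g c - g a) + infnorm (g b - g c)"
            using infnorm_triangle[of "g c - g a" "g b - g c"] by simp
          also have "\<dots> \<le> K * (b - a)" using 1 2 by (simp add: algebra_simps)
          finally show ?thesis .
        qed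
      qed
    qed
  qed
  have ord: "infnorm (g b - g a) \<le> K * (b - a)" if "a \<le> b" for a b
  proof -
    obtain i where i: "s i < a" using gs unfolding grid_lines_def by blast
    obtain k where k: "s k > b" using gs unfolding grid_lines_def by blast
    have "i < k" using i k that gl_le[OF gs, of k i] by (cases "i < k") auto
    then have "i + int (nat (k - i)) = k" by simp
    then show ?thesis using main[of i "nat (k - i)"] i k that by auto
  qed
  show ?thesis
  proof (cases "a \<le> b")
    case True then show ?thesis using ord by simp
  next
    case False
    then show ?thesis using ord[of b a] by (simp add: infnorm_sub)
  qed
qed


lemma global_bound:
  assumes gs: "grid_lines s" and gt: "grid_lines t" and B: "BMSDD (grid s t) N L"
  shows "infnorm (dd4 (coons s t N) x1 x2 y1 y2) \<le> 3 * L * \<bar>x2 - x1\<bar> * \<bar>y2 - y1\<bar>"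
proof -
  have A: "infnorm (dd4 (coons s t N) a b c d) \<le> 3 * L * \<bar>b - a\<bar> * \<bar>d - c\<bar>"
    if c: "t j \<le> c" "c \<le> t (j+1)" and d: "t j \<le> d" "d \<le> t (j+1)" for a b c d j
  proof -
    let ?g = "\<lambda>x. coons s t N x d - coons s t N x c"
    have "infnorm (?g b - ?g a) \<le> (3 * L * \<bar>d - c\<bar>) * \<bar>b - a\<bar>"
    proof (rule lip_extend[OF gs])
      fix i u v assume "s i \<le> u" "u \<le> v" "v \<le> s (i+1)"
      then have "infnorm (dd4 (coons s t N) u v c d) \<le> 3 * L * \<bar>v - u\<bar> * \<bar>d - c\<bar>"
        using cell_bound[OF gs gt B, of i u v j c d] c d by simp
      moreover have "dd4 (coons s t N) u v c d = ?g v - ?g u" by (simp add: dd4_def algebra_simps)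
      moreover have "3 * L * \<bar>v - u\<bar> * \<bar>d - c\<bar> = 3 * L * \<bar>d - c\<bar> * (v - u)"
        using \<open>u \<le> v\<close> by simp
      ultimately show "infnorm (?g v - ?g u) \<le> 3 * L * \<bar>d - c\<bar> * (v - u)"
        by metis
    qed
    moreover have "dd4 (coons s t N) a b c d = ?g b - ?g a" by (simp add: dd4_def algebra_simps)
    ultimately show ?thesis by (metis mult.commute mult.assoc)
  qed
  let ?h = "\<lambda>y. coons s t N x2 y - coons s t N x1 y"
  have "infnorm (?h y2 - ?h y1) \<le> (3 * L * \<bar>x2 - x1\<bar>) * \<bar>y2 - y1\<bar>"
  proof (rule lip_extend[OF gt])
    fix j u v assume "t j \<le> u" "u \<le> v" "v \<le> t (j+1)"
    then have "infnorm (dd4 (coons s t N) x1 x2 u v) \<le> 3 * L * \<bar>x2 - x1\<bar> * \<bar>v - u\<bar>"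
      using A[of j u v x1 x2] by simp
    moreover have "dd4 (coons s t N) x1 x2 u v = ?h v - ?h u" by (simp add: dd4_def algebra_simps)
    moreover have "3 * L * \<bar>x2 - x1\<bar> * \<bar>v - u\<bar> = 3 * L * \<bar>x2 - x1\<bar> * (v - u)"
      using \<open>u \<le> v\<close> by simp
    ultimately show "infnorm (?h v - ?h u) \<le> 3 * L * \<bar>x2 - x1\<bar> * (v - u)"
      by metis
  qed
  moreover have "dd4 (coons s t N) x1 x2 y1 y2 = ?h y2 - ?h y1" by (simp add: dd4_def algebra_simps)
  ultimately show ?thesis by (metis mult.commute mult.assoc)
qed

theorem corollary2:
  fixes s t :: "int \<Rightarrow> real" and N :: "real \<Rightarrow> real \<Rightarrow> real^'m" and L :: real
    and \<alpha>s \<beta>s \<alpha>t \<beta>t :: "int \<Rightarrow> real"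
  assumes "grid_lines s" and "grid_lines t"
    and "C0_net s t N"
    and "BMSDD (grid s t) N L"
    and "W_class \<alpha>s \<beta>s" and "W_class \<alpha>t \<beta>t"
  shows "BMSDD (grid (refine \<alpha>s \<beta>s s) (refine \<alpha>t \<beta>t t)) (coons s t N) (3 * L)"
  unfolding BMSDD_def
proof (intro allI impI)
  fix a b c d :: real assume ab: "a \<noteq> b" and cd: "c \<noteq> d"
  have p: "\<bar>a - b\<bar> * \<bar>c - d\<bar> > 0" using ab cd by auto
  have "infnorm (dd4 (coons s t N) a b c d) \<le> 3 * L * \<bar>b - a\<bar> * \<bar>d - c\<bar>"
    using global_bound[OF assms(1,2,4)] .
  then have "infnorm (dd4 (coons s t N) a b c d) \<le> 3 * L * (\<bar>a - b\<bar> * \<bar>c - d\<bar>)"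
    by (simp add: abs_minus_commute mult.assoc)
  then have "infnorm (dd4 (coons s t N) a b c d) / (\<bar>a - b\<bar> * \<bar>c - d\<bar>) \<le> 3 * L"
    using p by (simp add: divide_le_eq)
  then show "infnorm (mixed_dd (coons s t N) a b c d) \<le> 3 * L"
    by (simp add: mixed_dd_dd4 infnorm_mul abs_mult)
qed

end
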